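(* Let $d\ge1$ and for $k=1,2$ let $(\boldsymbol X_k,Y_k)=(X_{k,1},\ldots,X_{k,d},Y_k)$ be a random vector with continuous marginals and $(d+1)$-dimensional copula $C_k$. Fix $\boldsymbol{\alpha}\in[0,1)^d$ with $C_k(\boldsymbol\alpha,1)<1$ for $k=1,2$, and set $l_{\boldsymbol\alpha}(v)=\dfrac{v-C_1(\boldsymbol\alpha,v)}{v-C_2(\boldsymbol\alpha,v)}$. If $Y_1\le_{\rm st}Y_2$ and $l_{\boldsymbol\alpha}(v)\ge l_{\boldsymbol\alpha}(1)$ for all $v\in(0,1]$, then $$\mathrm{VCoVaR}_{\boldsymbol\alpha,\beta}(Y_1|\boldsymbol X_1)\le \mathrm{VCoVaR}_{\boldsymbol\alpha,\beta}(Y_2|\boldsymbol X_2)\quad\text{for all }\beta\in(0,1).$$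
   Context: $C(\boldsymbol{\alpha},v)=C(\alpha_1,\ldots,\alpha_d,v)$. For a distribution function $F$, $F^{-1}(t)=\inf\{x:F(x)\ge t\}$, $\mathrm{VaR}_t(Z)=F_Z^{-1}(t)$. $\mathrm{VCoVaR}_{\boldsymbol\alpha,\beta}(Y_k|\boldsymbol X_k)$ is the $\beta$-quantile of the conditional distribution of $Y_k$ given $\{\exists\, i: X_{k,i}>\mathrm{VaR}_{\alpha_i}(X_{k,i})\}$. $Y_1\le_{\rm st}Y_2$ (usual stochastic order) means $P(Y_1>x)\le P(Y_2>x)$ for all $x\in\mathbb{R}$. *)

theory Defs
  imports "HOL-Probability.Probability"
begin

definition cdf :: "'a measure \<Rightarrow> ('a \<Rightarrow> real) \<Rightarrow> real \<Rightarrow> real" where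
  "cdf M Z x = measure M {\<omega> \<in> space M. Z \<omega> \<le> x}"

text \<open>Generalised inverse F^{-1}(t) = inf {x. F x \<ge> t}, taken in the extended reals
  (so that e.g. the 0-quantile is -infinity, as in the paper).\<close>
definition gen_inv :: "(real \<Rightarrow> real) \<Rightarrow> real \<Rightarrow> ereal" where
  "gen_inv F t = Inf {ereal x | x. t \<le> F x}"

definition VaR :: "'a measure \<Rightarrow> ('a \<Rightarrow> real) \<Rightarrow> real \<Rightarrow> ereal" where
  "VaR M Z t = gen_inv (cdf M Z) t"

definition stress_event :: "'a measure \<Rightarrow> ('a \<Rightarrow> 'd \<Rightarrow> real) \<Rightarrow> ('d \<Rightarrow> real) \<Rightarrow> 'a set" where
  "stress_event M X \<alpha> = {\<omega> \<in> space M. \<exists>i. ereal (X \<omega> i) > VaR M (\<lambda>\<omega>. X \<omega> i) (\<alpha> i)}"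

definition VCoVaR :: "'a measure \<Rightarrow> ('a \<Rightarrow> 'd \<Rightarrow> real) \<Rightarrow> ('a \<Rightarrow> real) \<Rightarrow> ('d \<Rightarrow> real) \<Rightarrow> real \<Rightarrow> ereal" where
  "VCoVaR M X Y \<alpha> \<beta> =
     gen_inv (\<lambda>y. measure M ({\<omega> \<in> space M. Y \<omega> \<le> y} \<inter> stress_event M X \<alpha>)
                   / measure M (stress_event M X \<alpha>)) \<beta>"

text \<open>(d+1)-dimensional copula, written as a function C u v with u in [0,1]^d, v in [0,1]:
  grounded, uniform one-dimensional margins, and (d+1)-increasing.\<close>
definition is_copula :: "(('d::finite \<Rightarrow> real) \<Rightarrow> real \<Rightarrow> real) \<Rightarrow> bool" where
  "is_copula C \<longleftrightarrow>
     (\<forall>u v. (\<forall>i. u i \<in> {0..1}) \<and> v \<in> {0..1} \<and> ((\<exists>i. u i = 0) \<or> v = 0) \<longrightarrow> C u v = 0) \<and>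
     (\<forall>v \<in> {0..1}. C (\<lambda>_. 1) v = v) \<and>
     (\<forall>i. \<forall>t \<in> {0..1}. C ((\<lambda>_. 1)(i := t)) 1 = t) \<and>
     (\<forall>a b a0 b0. (\<forall>i. 0 \<le> a i \<and> a i \<le> b i \<and> b i \<le> 1) \<and> 0 \<le> a0 \<and> a0 \<le> b0 \<and> b0 \<le> 1 \<longrightarrow>
        0 \<le> (\<Sum>S\<in>Pow (UNIV :: 'd set).
               (-1) ^ card S * (C (\<lambda>i. if i \<in> S then a i else b i) b0
                                - C (\<lambda>i. if i \<in> S then a i else b i) a0)))"

definition is_copula_of :: "'a measure \<Rightarrow> ('a \<Rightarrow> ('d::finite) \<Rightarrow> real) \<Rightarrow> ('a \<Rightarrow> real)
    \<Rightarrow> (('d \<Rightarrow> real) \<Rightarrow> real \<Rightarrow> real) \<Rightarrow> bool" where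
  "is_copula_of M X Y C \<longleftrightarrow> is_copula C \<and>
     (\<forall>x y. measure M {\<omega> \<in> space M. (\<forall>i. X \<omega> i \<le> x i) \<and> Y \<omega> \<le> y}
            = C (\<lambda>i. cdf M (\<lambda>\<omega>. X \<omega> i) (x i)) (cdf M Y y))"

definition st_le :: "'a measure \<Rightarrow> ('a \<Rightarrow> real) \<Rightarrow> 'b measure \<Rightarrow> ('b \<Rightarrow> real) \<Rightarrow> bool" where
  "st_le M1 Y1 M2 Y2 \<longleftrightarrow>
     (\<forall>x. measure M1 {\<omega> \<in> space M1. Y1 \<omega> > x} \<le> measure M2 {\<omega> \<in> space M2. Y2 \<omega> > x})"

end

theory Submission
  imports Defs
begin


lemma cdf_eq_distr:
  assumes "prob_space M" "Z \<in> borel_measurable M"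
  shows "cdf M Z x = Distribution_Functions.cdf (distr M borel Z) x"
  using assms unfolding cdf_def Distribution_Functions.cdf_def
  by (simp add: measure_distr vimage_def Int_def conj_commute)

lemma cdf_props:
  assumes "prob_space M" "Z \<in> borel_measurable M"
  shows "mono (cdf M Z)" "\<And>x. 0 \<le> cdf M Z x" "\<And>x. cdf M Z x \<le> 1"
    "(cdf M Z \<longlongrightarrow> 1) at_top" "(cdf M Z \<longlongrightarrow> 0) at_bot"
proof -
  interpret real_distribution "distr M borel Z"
    using assms by (simp add: prob_space.real_distribution_distr)
  have e: "cdf M Z = Distribution_Functions.cdf (distr M borel Z)"
    using cdf_eq_distr[OF assms] by auto
  show "mono (cdf M Z)" unfolding e by (simp add: monoI cdf_nondecreasing)
  show "\<And>x. 0 \<le> cdf M Z x" unfolding e by (simp add: cdf_nonneg)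
  show "\<And>x. cdf M Z x \<le> 1" unfolding e by (simp add: cdf_bounded_prob)
  show "(cdf M Z \<longlongrightarrow> 1) at_top" unfolding e by (rule cdf_lim_at_top_prob)
  show "(cdf M Z \<longlongrightarrow> 0) at_bot" unfolding e by (rule cdf_lim_at_bot)
qed



lemma cop_step:
  fixes C :: "('d::finite \<Rightarrow> real) \<Rightarrow> real \<Rightarrow> real"
  assumes cop: "is_copula C" and b: "\<And>i. 0 \<le> b i \<and> b i \<le> 1" and t: "0 \<le> t" "t \<le> b j"
    and v: "0 \<le> v" "v \<le> 1"
  shows "C (b(j:=t)) 1 - C (b(j:=t)) v \<le> C b 1 - C b v"
proof -
  define a where "a = (\<lambda>i. if i = j then t else 0)"
  define mix where "mix S = (\<lambda>i. if i \<in> S then a i else b i)" for S :: "'d set"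
  define f where "f S = (-1::real) ^ card S * (C (mix S) 1 - C (mix S) v)" for S
  have grd: "\<And>u w. (\<forall>i. u i \<in> {0..1}) \<Longrightarrow> w \<in> {0..1} \<Longrightarrow> (\<exists>i. u i = 0) \<Longrightarrow> C u w = 0"
    using cop unfolding is_copula_def by blast
  have t1: "t \<le> 1" using t b[of j] by linarith
  have mix01: "\<forall>i. mix S i \<in> {0..1}" for S
    using b t t1 unfolding mix_def a_def by auto
  have "0 \<le> (\<Sum>S\<in>Pow (UNIV :: 'd set). f S)"
  proof -
    have ax: "\<forall>i. 0 \<le> a i \<and> a i \<le> b i \<and> b i \<le> 1" using b t unfolding a_def by auto
    have "\<forall>a b a0 b0. (\<forall>i. 0 \<le> a i \<and> a i \<le> b i \<and> b i \<le> 1) \<and> 0 \<le> a0 \<and> a0 \<le> b0 \<and> b0 \<le> 1 \<longrightarrow>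
        0 \<le> (\<Sum>S\<in>Pow (UNIV :: 'd set).
               (-1) ^ card S * (C (\<lambda>i. if i \<in> S then a i else b i) b0
                                - C (\<lambda>i. if i \<in> S then a i else b i) a0))"
      using cop unfolding is_copula_def by blast
    then show ?thesis using ax v unfolding f_def mix_def by blast
  qed
  also have "(\<Sum>S\<in>Pow (UNIV :: 'd set). f S) = (\<Sum>S\<in>{{},{j}}. f S)"
  proof (rule sum.mono_neutral_right)
    show "\<forall>S\<in>Pow UNIV - {{}, {j}}. f S = 0"
    proof
      fix S assume S: "S \<in> Pow (UNIV::'d set) - {{}, {j}}"
      then obtain i where i: "i \<in> S" "i \<noteq> j" by blast
      have "mix S i = 0" using i unfolding mix_def a_def by auto
      then have ex: "\<exists>i. mix S i = 0" by blast
      have "C (mix S) 1 = 0" "C (mix S) v = 0"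
        using grd[OF mix01 _ ex] v by auto
      then show "f S = 0" unfolding f_def by simp
    qed
  qed auto
  also have "\<dots> = f {} + f {j}" by simp
  also have "mix {} = b" "mix {j} = b(j:=t)" unfolding mix_def a_def by auto
  then have "f {} + f {j} = (C b 1 - C b v) - (C (b(j:=t)) 1 - C (b(j:=t)) v)"
    unfolding f_def by simp
  finally show ?thesis by simp
qed

lemma cop_lip:
  fixes C :: "('d::finite \<Rightarrow> real) \<Rightarrow> real \<Rightarrow> real"
  assumes cop: "is_copula C" and u: "\<And>i. 0 \<le> u i \<and> u i \<le> 1" and v: "0 \<le> v" "v \<le> 1"
  shows "0 \<le> C u 1 - C u v" "C u 1 - C u v \<le> 1 - v"
proof -
  have grd: "\<And>u w. (\<forall>i. u i \<in> {0..1}) \<Longrightarrow> w \<in> {0..1} \<Longrightarrow> (\<exists>i. u i = 0) \<Longrightarrow> C u w = 0"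
    using cop unfolding is_copula_def by blast
  fix j :: 'd
  have "C (u(j:=0)) 1 - C (u(j:=0)) v \<le> C u 1 - C u v"
    by (rule cop_step[OF cop u]) (use u v in auto)
  moreover have u0: "\<forall>i. (u(j:=0)) i \<in> {0..1}" "\<exists>i. (u(j:=0)) i = 0"
    using u by auto
  moreover have "C (u(j:=0)) 1 = 0" "C (u(j:=0)) v = 0"
    using grd[OF u0(1) _ u0(2)] v by (auto simp: fun_upd_def)
  ultimately show "0 \<le> C u 1 - C u v" by simp
  have "finite T \<Longrightarrow> C u 1 - C u v \<le> C (\<lambda>i. if i \<in> T then 1 else u i) 1 - C (\<lambda>i. if i \<in> T then 1 else u i) v" for T
  proof (induction T rule: finite_induct)
    case empty then show ?case by simp
  next
    case (insert j T)
    define w where "w = (\<lambda>i. if i \<in> T then 1 else u i)"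
    have w1: "(\<lambda>i. if i \<in> insert j T then 1 else u i) = w(j:=1)" unfolding w_def by auto
    have w2: "(w(j:=1))(j := w j) = w" by auto
    have "C ((w(j:=1))(j := w j)) 1 - C ((w(j:=1))(j := w j)) v \<le> C (w(j:=1)) 1 - C (w(j:=1)) v"
      by (rule cop_step[OF cop]) (use u v in \<open>auto simp: w_def\<close>)
    then have "C w 1 - C w v \<le> C (w(j:=1)) 1 - C (w(j:=1)) v" unfolding w2 .
    then show ?case unfolding w1 using insert.IH unfolding w_def by linarith
  qed
  from this[of UNIV] have "C u 1 - C u v \<le> C (\<lambda>_. 1) 1 - C (\<lambda>_. 1) v" by simp
  moreover have "C (\<lambda>_. 1) 1 = 1" "C (\<lambda>_. 1) v = v" using cop v unfolding is_copula_def by auto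
  ultimately show "C u 1 - C u v \<le> 1 - v" by simp
qed



lemma var_pos:
  assumes M: "prob_space M" "Z \<in> borel_measurable M" and c: "continuous_on UNIV (cdf M Z)"
    and a: "0 < a" "a < 1"
  shows "\<exists>q. cdf M Z q = a \<and> VaR M Z a = ereal q"
proof -
  let ?F = "cdf M Z"
  note P = cdf_props[OF M]
  have "\<forall>\<^sub>F x in at_bot. ?F x < a" using P(5) a by (simp add: order_tendsto_iff)
  then obtain b where b: "\<And>x. x \<le> b \<Longrightarrow> ?F x < a" by (auto simp: eventually_at_bot_linorder)
  have "\<forall>\<^sub>F x in at_top. ?F x > a" using P(4) a by (simp add: order_tendsto_iff)
  then obtain c0 where c0: "\<And>x. x \<ge> c0 \<Longrightarrow> ?F x > a" by (auto simp: eventually_at_top_linorder)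
  define c where "c = max c0 b"
  have Fc: "?F c > a" using c0 c_def by auto
  have Fb: "?F b < a" using b by auto
  have bc: "b \<le> c" using c_def by auto
  define T where "T = {x. a \<le> ?F x}"
  have clT: "closed T" unfolding T_def
    by (rule closed_Collect_le) (use c in auto)
  have neT: "T \<noteq> {}" using Fc T_def by (auto intro!: exI[of _ c])
  have bdd: "bdd_below T"
  proof
    fix x assume "x \<in> T"
    then show "b \<le> x" using b[of x] unfolding T_def by fastforce
  qed
  define q where "q = Inf T"
  have qT: "q \<in> T" unfolding q_def by (rule closed_contains_Inf[OF neT bdd clT])
  obtain q0 where q0: "b \<le> q0" "q0 \<le> c" "?F q0 = a"
    using IVT'[of ?F b a c] Fb Fc bc continuous_on_subset[OF c] by force
  have "q \<le> q0" unfolding q_def by (rule cInf_lower) (use q0 T_def bdd in auto)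
  then have "?F q \<le> a" using q0 P(1) by (metis monoD)
  with qT have Fq: "?F q = a" unfolding T_def by auto
  have "VaR M Z a = ereal q"
    unfolding VaR_def gen_inv_def
  proof (rule antisym)
    show "Inf {ereal x |x. a \<le> ?F x} \<le> ereal q" by (rule Inf_lower) (use qT T_def in auto)
    show "ereal q \<le> Inf {ereal x |x. a \<le> ?F x}"
    proof (rule Inf_greatest)
      fix e assume "e \<in> {ereal x |x. a \<le> ?F x}"
      then obtain x where "e = ereal x" "x \<in> T" unfolding T_def by auto
      then show "ereal q \<le> e" using cInf_lower[OF _ bdd] q_def by auto
    qed
  qed
  then show ?thesis using Fq by auto
qed

lemma var_zero:
  assumes M: "prob_space M" "Z \<in> borel_measurable M"
  shows "VaR M Z 0 = -\<infinity>"
proof -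
  note P = cdf_props[OF M]
  have le: "VaR M Z 0 \<le> ereal x" for x
    unfolding VaR_def gen_inv_def by (rule Inf_lower) (use P(2) in auto)
  show ?thesis
  proof (cases "VaR M Z 0")
    case (real r) then show ?thesis using le[of "r - 1"] by simp
  next
    case PInf then show ?thesis using le[of 0] by simp
  qed simp
qed



lemma stress_facts:
  fixes M :: "'a measure" and X :: "'a \<Rightarrow> ('d::finite) \<Rightarrow> real" and Y :: "'a \<Rightarrow> real"
    and C :: "('d \<Rightarrow> real) \<Rightarrow> real \<Rightarrow> real" and \<alpha> :: "'d \<Rightarrow> real"
  assumes M: "prob_space M" and mX: "\<And>i. (\<lambda>\<omega>. X \<omega> i) \<in> borel_measurable M"
    and mY: "Y \<in> borel_measurable M"
    and cX: "\<And>i. continuous_on UNIV (cdf M (\<lambda>\<omega>. X \<omega> i))"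
    and cop: "is_copula_of M X Y C" and al: "\<And>i. 0 \<le> \<alpha> i \<and> \<alpha> i < 1"
  shows "stress_event M X \<alpha> \<in> sets M"
    "\<And>y. measure M ({\<omega>\<in>space M. Y \<omega> \<le> y} \<inter> stress_event M X \<alpha>) = cdf M Y y - C \<alpha> (cdf M Y y)"
    "measure M (stress_event M X \<alpha>) = 1 - C \<alpha> 1"
proof -
  interpret prob_space M by (rule M)
  let ?S = "stress_event M X \<alpha>"
  let ?G = "cdf M Y"
  note PY = cdf_props[OF M mY]
  have isC: "is_copula C" using cop unfolding is_copula_of_def by blast
  have grd: "\<And>u w. (\<forall>i. u i \<in> {0..1}) \<Longrightarrow> w \<in> {0..1} \<Longrightarrow> (\<exists>i. u i = 0) \<Longrightarrow> C u w = 0"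
    using isC unfolding is_copula_def by blast
  define V where "V i = VaR M (\<lambda>\<omega>. X \<omega> i) (\<alpha> i)" for i
  have Seq: "?S = {\<omega>\<in>space M. \<exists>i. V i < ereal (X \<omega> i)}"
    unfolding stress_event_def V_def by simp
  show Sm: "?S \<in> sets M" unfolding Seq by measurable (use mX in auto)
  have By: "{\<omega>\<in>space M. Y \<omega> \<le> y} \<in> sets M" for y using mY by measurable
  have compl: "measure M ({\<omega>\<in>space M. Y \<omega> \<le> y} - ?S) = C \<alpha> (?G y)" for y
  proof (cases "\<exists>j. \<alpha> j = 0")
    case True
    then obtain j where j: "\<alpha> j = 0" by blast
    have "V j = -\<infinity>" unfolding V_def j by (rule var_zero[OF M mX])
    then have "?S = space M" unfolding Seq by (auto intro!: exI[of _ j])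
    then have "{\<omega>\<in>space M. Y \<omega> \<le> y} - ?S = {}" by auto
    moreover have "C \<alpha> (?G y) = 0"
      by (rule grd) (use al PY(2,3) j in \<open>auto simp: less_imp_le\<close>)
    ultimately show ?thesis by (simp only: measure_empty)
  next
    case False
    then have "\<forall>i. \<exists>q. cdf M (\<lambda>\<omega>. X \<omega> i) q = \<alpha> i \<and> V i = ereal q"
      using var_pos[OF M mX cX] al unfolding V_def by (metis order_le_less)
    then obtain q where q: "\<And>i. cdf M (\<lambda>\<omega>. X \<omega> i) (q i) = \<alpha> i" "\<And>i. V i = ereal (q i)"
      by metis
    have "{\<omega>\<in>space M. Y \<omega> \<le> y} - ?S = {\<omega>\<in>space M. (\<forall>i. X \<omega> i \<le> q i) \<and> Y \<omega> \<le> y}"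
      unfolding Seq q(2) ereal_less by (auto simp: not_less dest: leD)
    moreover have "(\<lambda>i. cdf M (\<lambda>\<omega>. X \<omega> i) (q i)) = \<alpha>" using q(1) by auto
    moreover have "\<forall>x y. measure M {\<omega> \<in> space M. (\<forall>i. X \<omega> i \<le> x i) \<and> Y \<omega> \<le> y}
            = C (\<lambda>i. cdf M (\<lambda>\<omega>. X \<omega> i) (x i)) (cdf M Y y)"
      using cop unfolding is_copula_of_def by blast
    then have "measure M {\<omega> \<in> space M. (\<forall>i. X \<omega> i \<le> q i) \<and> Y \<omega> \<le> y}
            = C (\<lambda>i. cdf M (\<lambda>\<omega>. X \<omega> i) (q i)) (cdf M Y y)" by blast
    ultimately show ?thesis by simp
  qed
  show num: "measure M ({\<omega>\<in>space M. Y \<omega> \<le> y} \<inter> ?S) = ?G y - C \<alpha> (?G y)" for y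
  proof -
    have "measure M ({\<omega>\<in>space M. Y \<omega> \<le> y} - ?S) =
      measure M {\<omega>\<in>space M. Y \<omega> \<le> y} - measure M ({\<omega>\<in>space M. Y \<omega> \<le> y} \<inter> ?S)"
      using finite_measure_Diff'[OF By Sm] .
    moreover have "measure M {\<omega>\<in>space M. Y \<omega> \<le> y} = ?G y" unfolding cdf_def ..
    ultimately show ?thesis using compl[of y] by simp
  qed
  let ?A = "space M - ?S"
  have bnd: "\<bar>measure M ?A - C \<alpha> 1\<bar> \<le> 1 - ?G y" for y
  proof -
    have l1: "measure M ({\<omega>\<in>space M. Y \<omega> \<le> y} - ?S) \<le> measure M ?A"
      by (rule finite_measure_mono) (use Sm in auto)
    have "?A \<subseteq> ({\<omega>\<in>space M. Y \<omega> \<le> y} - ?S) \<union> (space M - {\<omega>\<in>space M. Y \<omega> \<le> y})" by auto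
    then have "measure M ?A \<le> measure M (({\<omega>\<in>space M. Y \<omega> \<le> y} - ?S) \<union> (space M - {\<omega>\<in>space M. Y \<omega> \<le> y}))"
      by (intro finite_measure_mono) (use Sm By in auto)
    also have "\<dots> \<le> measure M ({\<omega>\<in>space M. Y \<omega> \<le> y} - ?S) + measure M (space M - {\<omega>\<in>space M. Y \<omega> \<le> y})"
      by (rule measure_Un_le) (use Sm By in auto)
    also have "measure M (space M - {\<omega>\<in>space M. Y \<omega> \<le> y}) = 1 - ?G y"
      using prob_compl[OF By] unfolding cdf_def by simp
    finally have l2: "measure M ?A \<le> C \<alpha> (?G y) + (1 - ?G y)" using compl by simp
    have "0 \<le> C \<alpha> 1 - C \<alpha> (?G y)" "C \<alpha> 1 - C \<alpha> (?G y) \<le> 1 - ?G y"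
      using cop_lip[OF isC _ PY(2) PY(3)] al by (auto simp: less_imp_le)
    then show ?thesis using l1 l2 compl[of y] by linarith
  qed
  have "measure M ?A = C \<alpha> 1"
  proof (rule ccontr)
    assume ne: "measure M ?A \<noteq> C \<alpha> 1"
    then have "1 - \<bar>measure M ?A - C \<alpha> 1\<bar> < 1" by simp
    then have "\<forall>\<^sub>F y in at_top. ?G y > 1 - \<bar>measure M ?A - C \<alpha> 1\<bar>"
      using PY(4) by (simp add: order_tendsto_iff)
    then obtain y where "?G y > 1 - \<bar>measure M ?A - C \<alpha> 1\<bar>" by (auto simp: eventually_at_top_linorder)
    with bnd[of y] show False by linarith
  qed
  then show "measure M ?S = 1 - C \<alpha> 1" using prob_compl[OF Sm] by simp
qed



theorem theorem4p1:
  fixes M1 :: "'a measure" and M2 :: "'b measure"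
    and X1 :: "'a \<Rightarrow> ('d::finite) \<Rightarrow> real" and Y1 :: "'a \<Rightarrow> real"
    and X2 :: "'b \<Rightarrow> 'd \<Rightarrow> real" and Y2 :: "'b \<Rightarrow> real"
    and C1 C2 :: "('d \<Rightarrow> real) \<Rightarrow> real \<Rightarrow> real"
    and \<alpha> :: "'d \<Rightarrow> real"
  assumes "prob_space M1" and "prob_space M2"
    and "\<And>i. (\<lambda>\<omega>. X1 \<omega> i) \<in> borel_measurable M1" and "Y1 \<in> borel_measurable M1"
    and "\<And>i. (\<lambda>\<omega>. X2 \<omega> i) \<in> borel_measurable M2" and "Y2 \<in> borel_measurable M2"
    and "\<And>i. continuous_on UNIV (cdf M1 (\<lambda>\<omega>. X1 \<omega> i))" and "continuous_on UNIV (cdf M1 Y1)"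
    and "\<And>i. continuous_on UNIV (cdf M2 (\<lambda>\<omega>. X2 \<omega> i))" and "continuous_on UNIV (cdf M2 Y2)"
    and "is_copula_of M1 X1 Y1 C1" and "is_copula_of M2 X2 Y2 C2"
    and "\<And>i. 0 \<le> \<alpha> i \<and> \<alpha> i < 1"
    and "C1 \<alpha> 1 < 1" and "C2 \<alpha> 1 < 1"
    and "st_le M1 Y1 M2 Y2"
    and "\<And>v. 0 < v \<Longrightarrow> v \<le> 1 \<Longrightarrow>
           (v - C1 \<alpha> v) / (v - C2 \<alpha> v) \<ge> (1 - C1 \<alpha> 1) / (1 - C2 \<alpha> 1)"
  shows "\<forall>\<beta>. 0 < \<beta> \<and> \<beta> < 1 \<longrightarrow> VCoVaR M1 X1 Y1 \<alpha> \<beta> \<le> VCoVaR M2 X2 Y2 \<alpha> \<beta>"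
proof -
  note F1 = stress_facts[where \<alpha>=\<alpha>, OF assms(1,3,4,7,11,13)]
  note F2 = stress_facts[where \<alpha>=\<alpha>, OF assms(2,5,6,9,12,13)]
  note P1 = cdf_props[OF assms(1,4)]
  note P2 = cdf_props[OF assms(2,6)]
  let ?S1 = "stress_event M1 X1 \<alpha>" and ?S2 = "stress_event M2 X2 \<alpha>"
  let ?G1 = "cdf M1 Y1" and ?G2 = "cdf M2 Y2"
  define a1 where "a1 = 1 - C1 \<alpha> 1"
  define a2 where "a2 = 1 - C2 \<alpha> 1"
  have a1: "a1 > 0" and a2: "a2 > 0" using assms(14,15) a1_def a2_def by auto
  define H1 where "H1 y = measure M1 ({\<omega> \<in> space M1. Y1 \<omega> \<le> y} \<inter> ?S1) / measure M1 ?S1" for y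
  define H2 where "H2 y = measure M2 ({\<omega> \<in> space M2. Y2 \<omega> \<le> y} \<inter> ?S2) / measure M2 ?S2" for y
  have H1: "H1 y = (?G1 y - C1 \<alpha> (?G1 y)) / a1" for y unfolding H1_def F1(2,3) a1_def ..
  have H2: "H2 y = (?G2 y - C2 \<alpha> (?G2 y)) / a2" for y unfolding H2_def F2(2,3) a2_def ..
  have H1nn: "H1 y \<ge> 0" for y unfolding H1_def by (intro divide_nonneg_nonneg measure_nonneg)
  have H2nn: "?G2 y - C2 \<alpha> (?G2 y) \<ge> 0" for y
    using F2(2)[of y] measure_nonneg[of M2 "{\<omega> \<in> space M2. Y2 \<omega> \<le> y} \<inter> ?S2"] by linarith
  have H1mono: "z \<le> y \<Longrightarrow> H1 z \<le> H1 y" for z y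
  proof -
    assume "z \<le> y"
    interpret prob_space M1 by (rule assms(1))
    have "measure M1 ({\<omega> \<in> space M1. Y1 \<omega> \<le> z} \<inter> ?S1) \<le> measure M1 ({\<omega> \<in> space M1. Y1 \<omega> \<le> y} \<inter> ?S1)"
      by (rule finite_measure_mono) (use \<open>z \<le> y\<close> F1(1) assms(4) in auto)
    then show ?thesis unfolding H1_def by (simp add: divide_right_mono)
  qed
  have Gle: "?G2 y \<le> ?G1 y" for y
  proof -
    interpret p1: prob_space M1 by (rule assms(1))
    interpret p2: prob_space M2 by (rule assms(2))
    have B1: "{\<omega>\<in>space M1. Y1 \<omega> \<le> y} \<in> sets M1" using assms(4) by measurable
    have B2: "{\<omega>\<in>space M2. Y2 \<omega> \<le> y} \<in> sets M2" using assms(6) by measurable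
    have e1: "{\<omega> \<in> space M1. Y1 \<omega> > y} = space M1 - {\<omega>\<in>space M1. Y1 \<omega> \<le> y}" by auto
    have e2: "{\<omega> \<in> space M2. Y2 \<omega> > y} = space M2 - {\<omega>\<in>space M2. Y2 \<omega> \<le> y}" by auto
    have "measure M1 {\<omega> \<in> space M1. Y1 \<omega> > y} \<le> measure M2 {\<omega> \<in> space M2. Y2 \<omega> > y}"
      using assms(16) unfolding st_le_def by blast
    then show ?thesis unfolding e1 e2 p1.prob_compl[OF B1] p2.prob_compl[OF B2] cdf_def by simp
  qed
  have key: "H2 y \<le> H1 y" for y
  proof -
    define v where "v = ?G2 y"
    have v01: "0 \<le> v" "v \<le> 1" using P2(2,3) v_def by auto
    show ?thesis
    proof (cases "v = 0")
      case True
      have grd: "\<forall>u v. (\<forall>i. u i \<in> {0..1}) \<and> v \<in> {0..1} \<and> ((\<exists>i. u i = 0) \<or> v = 0) \<longrightarrow> C2 u v = 0"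
        using assms(12) unfolding is_copula_of_def is_copula_def by blast
      have "\<forall>i. \<alpha> i \<in> {0..1}" using assms(13) by (auto simp: less_imp_le)
      then have "C2 \<alpha> 0 = 0" using grd by simp
      then have "H2 y = 0" unfolding H2 using True v_def by simp
      then show ?thesis using H1nn by simp
    next
      case False
      then have vpos: "v > 0" using v01 by simp
      have "\<forall>\<^sub>F x in at_bot. ?G1 x < v" using P1(5) vpos by (simp add: order_tendsto_iff)
      then obtain b0 where b0: "\<And>x. x \<le> b0 \<Longrightarrow> ?G1 x < v" by (auto simp: eventually_at_bot_linorder)
      define b where "b = min b0 y"
      have Gb: "?G1 b \<le> v" using b0[of b] b_def by simp
      have Gy: "v \<le> ?G1 y" using Gle v_def by simp
      obtain z where z: "b \<le> z" "z \<le> y" "?G1 z = v"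
        using IVT'[of ?G1 b v y] Gb Gy b_def continuous_on_subset[OF assms(8)] by force
      have "H1 z \<le> H1 y" using H1mono z by simp
      have H1z: "H1 z = (v - C1 \<alpha> v) / a1" using H1 z by simp
      have H2y: "H2 y = (v - C2 \<alpha> v) / a2" using H2 v_def by simp
      have hyp: "(v - C1 \<alpha> v) / (v - C2 \<alpha> v) \<ge> a1 / a2"
        using assms(17)[OF vpos v01(2)] a1_def a2_def by simp
      have d2: "v - C2 \<alpha> v \<ge> 0" using H2nn v_def by simp
      show ?thesis
      proof (cases "v - C2 \<alpha> v = 0")
        case True
        then show ?thesis using H2y H1nn by simp
      next
        case False
        then have d2p: "v - C2 \<alpha> v > 0" using d2 by simp
        have "a1 / a2 * (v - C2 \<alpha> v) \<le> v - C1 \<alpha> v"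
          using hyp d2p by (simp add: pos_le_divide_eq)
        then have "(v - C2 \<alpha> v) / a2 \<le> (v - C1 \<alpha> v) / a1"
          using a1 a2 by (simp add: field_simps)
        then show ?thesis using H1z H2y \<open>H1 z \<le> H1 y\<close> by simp
      qed
    qed
  qed
  show ?thesis
  proof (intro allI impI)
    fix \<beta> :: real
    have "{ereal x |x. \<beta> \<le> H2 x} \<subseteq> {ereal x |x. \<beta> \<le> H1 x}"
      using key by (auto intro: order_trans)
    then have "Inf {ereal x |x. \<beta> \<le> H1 x} \<le> Inf {ereal x |x. \<beta> \<le> H2 x}"
      by (rule Inf_superset_mono)
    then show "VCoVaR M1 X1 Y1 \<alpha> \<beta> \<le> VCoVaR M2 X2 Y2 \<alpha> \<beta>"
      unfolding VCoVaR_def gen_inv_def H1_def H2_def by simp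
  qed
qed

end
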